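(* For all positive integers $\beta,p$, the transition matrix $A_{\beta,p}$ is irreducible.
   Context: Let $\beta,p$ be positive integers. Let $S_{\beta,p}=\{\mathbf{s}\in\{0,1\}^{\beta-1}: wt(\mathbf{s})\le p\}$, where $wt$ is Hamming weight, let $M=\sum_{i=0}^p\binom{\beta-1}{i}=|S_{\beta,p}|$, and fix an ordering $\mathbf{s}_1,\ldots,\mathbf{s}_M$ of $S_{\beta,p}$. The merge of two vectors $\mathbf{u},\mathbf{v}\in\{0,1\}^{\beta-1}$ is $f(\mathbf{u},\mathbf{v})=\mathbf{u}$ concatenated with the last bit of $\mathbf{v}$ (a vector of length $\beta$) if the last $\beta-2$ bits of $\mathbf{u}$ equal the first $\beta-2$ bits of $\mathbf{v}$, and $f(\mathbf{u},\mathbf{v})=\mathbf{F}$ (failure) otherwise. The transition matrix $A_{\beta,p}=(a_{i,j})\in\{0,1\}^{M\times M}$ has $a_{i,j}=1$ if $f(\mathbf{s}_i,\mathbf{s}_j)\neq\mathbf{F}$ and $wt(f(\mathbf{s}_i,\mathbf{s}_j))\le p$, and $a_{i,j}=0$ otherwise. A matrix $A\in\{0,1\}^{M\times M}$ is irreducible if for all $1\le i,j\le M$ there is an integer $k\ge 0$ (possibly depending on $i,j$) with $(A^k)_{i,j}>0$. *)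

theory Defs
  imports "Jordan_Normal_Form.Matrix"
begin

text \<open>Binary vectors are modelled as bool lists (True = 1).\<close>

definition wt :: "bool list \<Rightarrow> nat" where
  "wt xs = length (filter id xs)"

definition S_set :: "nat \<Rightarrow> nat \<Rightarrow> bool list set" where
  "S_set \<beta> p = {s. length s = \<beta> - 1 \<and> wt s \<le> p}"

definition M_size :: "nat \<Rightarrow> nat \<Rightarrow> nat" where
  "M_size \<beta> p = (\<Sum>i=0..p. (\<beta> - 1) choose i)"

text \<open>Merge; None plays the role of the failure symbol F.
  The last beta-2 bits of u are compared with the first beta-2 bits of v.\<close>
definition merge :: "nat \<Rightarrow> bool list \<Rightarrow> bool list \<Rightarrow> bool list option" where
  "merge \<beta> u v =
     (if drop (length u - (\<beta> - 2)) u = take (\<beta> - 2) v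
      then Some (u @ [last v]) else None)"

definition trans_mat :: "nat \<Rightarrow> nat \<Rightarrow> (nat \<Rightarrow> bool list) \<Rightarrow> nat mat" where
  "trans_mat \<beta> p s = mat (M_size \<beta> p) (M_size \<beta> p)
     (\<lambda>(i,j). case merge \<beta> (s i) (s j) of
               None \<Rightarrow> 0
             | Some w \<Rightarrow> (if wt w \<le> p then 1 else 0))"

definition irreducible_mat :: "nat mat \<Rightarrow> bool" where
  "irreducible_mat A \<longleftrightarrow> (\<forall>i < dim_row A. \<forall>j < dim_row A. \<exists>k. (A ^\<^sub>m k) $$ (i,j) > 0)"

end

theory Submission
  imports Defs
begin

lemma pow_step:
  fixes A :: "nat mat"
  assumes A: "A \<in> carrier_mat N N" and i: "i < N" and j: "j < N" and l: "l < N"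
    and h1: "(A ^\<^sub>m k) $$ (i,j) > 0" and h2: "A $$ (j,l) > 0"
  shows "(A ^\<^sub>m Suc k) $$ (i,l) > 0"
proof -
  have "(A ^\<^sub>m Suc k) $$ (i,l) = row (A ^\<^sub>m k) i \<bullet> col A l"
    using A i l by simp
  also have "\<dots> = (\<Sum>m\<in>{0..<N}. (A ^\<^sub>m k) $$ (i,m) * A $$ (m,l))"
    unfolding scalar_prod_def using A i l by (intro sum.cong) auto
  also have "\<dots> \<ge> (A ^\<^sub>m k) $$ (i,j) * A $$ (j,l)"
    by (rule member_le_sum) (use j in auto)
  finally show ?thesis using h1 h2 by (meson less_le_trans nat_0_less_mult_iff)
qed

lemma wt_append[simp]: "wt (xs @ ys) = wt xs + wt ys"
  by (simp add: wt_def)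
lemma wt_Nil[simp]: "wt [] = 0"
  by (simp add: wt_def)
lemma wt_Cons[simp]: "wt (b # xs) = of_bool b + wt xs"
  by (simp add: wt_def)
lemma wt_rep[simp]: "wt (replicate m False) = 0"
  by (simp add: wt_def)
lemma wt_take: "wt (take m v) \<le> wt v"
  by (metis append_take_drop_id le_add1 wt_append)
lemma wt_drop: "wt (drop m v) \<le> wt v"
  by (metis append_take_drop_id le_add2 wt_append)

theorem lemma1:
  fixes \<beta> p :: nat and s :: "nat \<Rightarrow> bool list"
  assumes "\<beta> > 0" and "p > 0"
    and "bij_betw s {..<M_size \<beta> p} (S_set \<beta> p)"
  shows "irreducible_mat (trans_mat \<beta> p s)"
proof -
  define N where "N = M_size \<beta> p"
  define A where "A = trans_mat \<beta> p s"
  define n where "n = \<beta> - 1"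
  define S where "S = S_set \<beta> p"
  have bij: "bij_betw s {..<N} S" using assms(3) by (simp add: N_def S_def)
  have Ac: "A \<in> carrier_mat N N" by (simp add: A_def trans_mat_def N_def)
  define idx where "idx = inv_into {..<N} s"
  have idxS: "idx u < N" "s (idx u) = u" if "u \<in> S" for u
    using bij that unfolding idx_def
    by (auto simp: bij_betw_def intro: inv_into_into f_inv_into_f)
  have idx_s: "idx (s i) = i" if "i < N" for i
    using bij that unfolding idx_def by (simp add: bij_betw_def inv_into_f_f)
  have sS: "s i \<in> S" if "i < N" for i using bij that by (auto simp: bij_betw_def)
  define R where "R = (\<lambda>u v. \<exists>k. (A ^\<^sub>m k) $$ (idx u, idx v) > 0)"
  have Rrefl: "R u u" if "u \<in> S" for u
  proof -
    have "(A ^\<^sub>m 0) $$ (idx u, idx u) = 1" using Ac idxS[OF that] by simp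
    then show ?thesis unfolding R_def by (intro exI[of _ 0]) simp
  qed
  have Rstep: "R u w" if "R u v" "u \<in> S" "v \<in> S" "w \<in> S" "A $$ (idx v, idx w) > 0" for u v w
    using that pow_step[OF Ac idxS(1)[of u] idxS(1)[of v] idxS(1)[of w]] unfolding R_def by blast
  have S_iff: "u \<in> S \<longleftrightarrow> length u = n \<and> wt u \<le> p" for u
    by (simp add: S_def S_set_def n_def)
  show ?thesis
  proof (cases "n = 0")
    case True
    then have "S \<subseteq> {[]}" using S_iff by auto
    show ?thesis unfolding irreducible_mat_def
    proof (intro allI impI)
      fix i j assume "i < dim_row (trans_mat \<beta> p s)" "j < dim_row (trans_mat \<beta> p s)"
      then have ij: "i < N" "j < N" using Ac A_def by auto
      have "length (s i) = 0" "length (s j) = 0" using sS[OF ij(1)] sS[OF ij(2)] S_iff True by auto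
      then have "s i = s j" by simp
      then have "i = j" using ij idx_s by metis
      then show "\<exists>k. (trans_mat \<beta> p s ^\<^sub>m k) $$ (i, j) > 0"
        using Rrefl[OF sS[OF ij(1)]] idx_s[OF ij(1)] unfolding R_def A_def by auto
    qed
  next
    case False
    have edge: "A $$ (idx u, idx (tl u @ [b])) > 0"
      if u: "u \<in> S" and wb: "wt u + of_bool b \<le> p" for u b
    proof -
      have lu: "length u = n" using u S_iff by auto
      have "wt (tl u) \<le> wt u" using wt_drop[of 1 u] by (simp add: drop_Suc)
      then have v: "tl u @ [b] \<in> S" using lu wb S_iff False by auto
      have b2: "\<beta> - 2 = n - 1" "length u - (\<beta> - 2) = 1" using False lu n_def by auto
      have "merge \<beta> u (tl u @ [b]) = Some (u @ [b])"
        unfolding merge_def b2 using lu False by (simp add: drop_Suc)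
      then show ?thesis using idxS[OF u] idxS[OF v] wb
        unfolding A_def trans_mat_def N_def by simp
    qed
    have Rz: "R u (drop m u @ replicate m False)" if u: "u \<in> S" and m: "m \<le> n" for u m
      using m
    proof (induction m)
      case 0 then show ?case using Rrefl[OF u] by simp
    next
      case (Suc m)
      let ?w = "drop m u @ replicate m False"
      have lu: "length u = n" using u S_iff by auto
      have wS: "?w \<in> S" using S_iff u lu Suc.prems wt_drop[of m u] by auto
      have e: "tl ?w @ [False] = drop (Suc m) u @ replicate (Suc m) False"
        using Suc.prems lu by (simp add: drop_Suc tl_drop replicate_append_same)
      have wt_ok: "wt ?w + of_bool False \<le> p" using wS S_iff by auto
      have wS2: "tl ?w @ [False] \<in> S"
        unfolding e using S_iff u lu Suc.prems wt_drop[of "Suc m" u] by auto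
      have "R u (tl ?w @ [False])"
        using Rstep[OF Suc.IH[OF Suc_leD[OF Suc.prems]] u wS wS2 edge[OF wS wt_ok]] .
      then show ?case using e by simp
    qed
    have Rv: "R u0 (replicate (n - m) False @ take m v)"
      if v: "v \<in> S" and m: "m \<le> n" and u0: "u0 \<in> S" and r0: "R u0 (replicate n False)" for v m u0
      using m
    proof (induction m)
      case 0
      show ?case using r0 by simp
    next
      case (Suc m)
      let ?w = "replicate (n - m) False @ take m v"
      have lv: "length v = n" using v S_iff by auto
      have z: "replicate n False \<in> S" using S_iff by simp
      have wS: "?w \<in> S" using S_iff v lv Suc.prems wt_take[of m v] by auto
      have tk: "take (Suc m) v = take m v @ [v ! m]"
        using Suc.prems lv by (simp add: take_Suc_conv_app_nth)
      have nm: "n - m = Suc (n - Suc m)" using Suc.prems by simp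
      have e: "tl ?w @ [v ! m] = replicate (n - Suc m) False @ take (Suc m) v"
        by (simp add: nm tk)
      have wt_ok: "wt ?w + of_bool (v ! m) \<le> p"
        using wt_take[of "Suc m" v] v S_iff tk by auto
      have wS2: "tl ?w @ [v ! m] \<in> S"
        unfolding e using S_iff v lv Suc.prems wt_take[of "Suc m" v] by auto
      have "R u0 (tl ?w @ [v ! m])"
        using Rstep[OF Suc.IH[OF Suc_leD[OF Suc.prems]] u0 wS wS2 edge[OF wS wt_ok]] .
      then show ?case using e by simp
    qed
    show ?thesis unfolding irreducible_mat_def
    proof (intro allI impI)
      fix i j assume "i < dim_row (trans_mat \<beta> p s)" "j < dim_row (trans_mat \<beta> p s)"
      then have ij: "i < N" "j < N" using Ac A_def by auto
      let ?u = "s i" and ?v = "s j"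
      have u: "?u \<in> S" and v: "?v \<in> S" using sS ij by auto
      have lu: "length ?u = n" and lv: "length ?v = n" using u v S_iff by auto
      have r1: "R ?u (replicate n False)" using Rz[OF u, of n] lu by simp
      have "R ?u ?v" using Rv[OF v, of n ?u] lv r1 u by simp
      then show "\<exists>k. (trans_mat \<beta> p s ^\<^sub>m k) $$ (i, j) > 0"
        using idx_s ij unfolding R_def A_def by auto
    qed
  qed
qed

end
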